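(* Let $\bm{A}=[\bm{A}_1\ \bm{A}_2]$ have full column rank with $\bm{A}_j^\top\bm{A}_j=\bm{I}_j$ and $\bm{C}:=\bm{A}_2^\top\bm{A}_1\ne0$. Let $S_{00}:=(0,1]\times(0,1]$, $S_{01}:=(0,1]\times[1,\infty)$, $S_{10}:=[1,\infty)\times(0,1]$. Then $\min_{(\gamma_1,\gamma_2)\in S_{00}}\rho(\bm{M}(\gamma_1,\gamma_2))=\rho(\bm{M}(1,1))$, $\min_{(\gamma_1,\gamma_2)\in S_{01}}\rho(\bm{M}(\gamma_1,\gamma_2))=\min_{\gamma_2\ge1}\rho(\bm{M}(1,\gamma_2))$, and $\min_{(\gamma_1,\gamma_2)\in S_{10}}\rho(\bm{M}(\gamma_1,\gamma_2))=\min_{\gamma_1\ge1}\rho(\bm{M}(\gamma_1,1))$.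
   Context: $\rho$: spectral radius. $\bm{M}(\gamma_1,\gamma_2)=\begin{bmatrix}(1-\gamma_1)\bm{I}_1&-\gamma_1\bm{C}^\top\\-\gamma_2(1-\gamma_1)\bm{C}&(1-\gamma_2)\bm{I}_2+\gamma_1\gamma_2\bm{C}\bm{C}^\top\end{bmatrix}$, the two-block gradient descent iteration matrix with stepsizes $\gamma_1,\gamma_2$ for least squares under $\bm{A}_j^\top\bm{A}_j=\bm{I}_j$. *)

theory Defs
  imports "Jordan_Normal_Form.Spectral_Radius"
begin

definition rho :: "real mat \<Rightarrow> real" where
  "rho M = spectral_radius (map_mat complex_of_real M)"

text \<open>Two-block gradient descent iteration matrix M(g1,g2), C is n2 x n1.\<close>
definition iterM :: "nat \<Rightarrow> nat \<Rightarrow> real mat \<Rightarrow> real \<Rightarrow> real \<Rightarrow> real mat" where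
  "iterM n1 n2 C g1 g2 = four_block_mat
     ((1 - g1) \<cdot>\<^sub>m 1\<^sub>m n1)                 ((- g1) \<cdot>\<^sub>m transpose_mat C)
     ((- (g2 * (1 - g1))) \<cdot>\<^sub>m C)        ((1 - g2) \<cdot>\<^sub>m 1\<^sub>m n2 + (g1 * g2) \<cdot>\<^sub>m (C * transpose_mat C))"

text \<open>Horizontal concatenation [A1 A2] of two m-row matrices.\<close>
definition hcat :: "'a::zero mat \<Rightarrow> 'a mat \<Rightarrow> 'a mat" where
  "hcat A1 A2 = four_block_mat A1 A2 (0\<^sub>m 0 (dim_col A1)) (0\<^sub>m 0 (dim_col A2))"

definition full_column_rank :: "'a::field mat \<Rightarrow> bool" where
  "full_column_rank A \<longleftrightarrow> (\<forall>v \<in> carrier_vec (dim_col A). A *\<^sub>v v = 0\<^sub>v (dim_row A) \<longrightarrow> v = 0\<^sub>v (dim_col A))"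

definition is_min :: "real set \<Rightarrow> real \<Rightarrow> bool" where
  "is_min S x \<longleftrightarrow> x \<in> S \<and> (\<forall>y\<in>S. x \<le> y)"

end

theory Submission
  imports Defs
begin


abbreviation cm :: "real mat \<Rightarrow> complex mat" where "cm A \<equiv> map_mat complex_of_real A"

lemma conj_mv:
  assumes R: "R \<in> carrier_mat a b" and y: "y \<in> carrier_vec b"
  shows "conjugate (cm R *\<^sub>v y) = cm R *\<^sub>v conjugate y"
  apply (rule eq_vecI)
  using R y by (auto simp: mult_mat_vec_def scalar_prod_def sum_conjugate conjugate_dist_mul)

lemma adj1:
  assumes R: "R \<in> carrier_mat a b" and w: "w \<in> carrier_vec a" and y: "y \<in> carrier_vec b"
  shows "(transpose_mat (cm R) *\<^sub>v w) \<bullet>c y = w \<bullet>c (cm R *\<^sub>v y)"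
proof -
  have "(transpose_mat (cm R) *\<^sub>v w) \<bullet>c y = w \<bullet> (cm R *\<^sub>v conjugate y)"
    by (rule transpose_vec_mult_scalar[of _ a b], insert R w y, auto)
  also have "\<dots> = w \<bullet>c (cm R *\<^sub>v y)" using conj_mv[OF R y] by simp
  finally show ?thesis .
qed

lemma adj2:
  assumes R: "R \<in> carrier_mat a b" and w: "w \<in> carrier_vec b" and y: "y \<in> carrier_vec a"
  shows "(cm R *\<^sub>v w) \<bullet>c y = w \<bullet>c (transpose_mat (cm R) *\<^sub>v y)"
proof -
  have RT: "transpose_mat R \<in> carrier_mat b a" using R by auto
  have e: "transpose_mat (cm (transpose_mat R)) = cm R" by (simp add: map_mat_transpose[symmetric])
  have e2: "cm (transpose_mat R) = transpose_mat (cm R)" by (simp add: map_mat_transpose)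
  show ?thesis using adj1[OF RT w y] unfolding e2 by simp
qed

lemma conj_minus_vec: "dim_vec u = dim_vec v \<Longrightarrow> conjugate (u - v :: complex vec) = conjugate u - conjugate v"
  by (rule eq_vecI, auto)

lemma re_mv:
  assumes R: "R \<in> carrier_mat a b" and y: "y \<in> carrier_vec b"
  shows "map_vec Re (cm R *\<^sub>v y) = R *\<^sub>v map_vec Re y"
  apply (rule eq_vecI)
  using R y by (auto simp: mult_mat_vec_def scalar_prod_def Re_sum)

lemma im_mv:
  assumes R: "R \<in> carrier_mat a b" and y: "y \<in> carrier_vec b"
  shows "map_vec Im (cm R *\<^sub>v y) = R *\<^sub>v map_vec Im y"
  apply (rule eq_vecI)
  using R y by (auto simp: mult_mat_vec_def scalar_prod_def Im_sum)

lemma cm_mult: "A \<in> carrier_mat a b \<Longrightarrow> B \<in> carrier_mat b c \<Longrightarrow> cm (A * B) = cm A * cm B"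
  by (rule of_real_hom.mat_hom_mult)

lemma tcm: "transpose_mat (cm A) = cm (transpose_mat A)" by (simp add: map_mat_transpose)

lemma complex_ge0_real: "(0::complex) \<le> x \<Longrightarrow> x = of_real (Re x) \<and> 0 \<le> Re x"
  by (auto simp: less_eq_complex_def complex_eq_iff)

lemma spec_lemma:
  fixes A B :: "real mat" and y :: "complex vec"
  assumes A: "A \<in> carrier_mat m p" and B: "B \<in> carrier_mat m q"
    and oA: "transpose_mat A * A = 1\<^sub>m p" and oB: "transpose_mat B * B = 1\<^sub>m q"
    and inj: "\<And>u v. u \<in> carrier_vec p \<Longrightarrow> v \<in> carrier_vec q \<Longrightarrow> A *\<^sub>v u = B *\<^sub>v v \<Longrightarrow> v = 0\<^sub>v q"
    and y: "y \<in> carrier_vec q" and y0: "y \<noteq> 0\<^sub>v q"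
    and eq: "transpose_mat (cm B) *\<^sub>v (cm A *\<^sub>v (transpose_mat (cm A) *\<^sub>v (cm B *\<^sub>v y))) = \<mu> \<cdot>\<^sub>v y"
  shows "\<mu> = of_real (Re \<mu>) \<and> 0 \<le> Re \<mu> \<and> Re \<mu> < 1 \<and> (\<mu> = 0 \<longrightarrow> transpose_mat (cm A) *\<^sub>v (cm B *\<^sub>v y) = 0\<^sub>v p)"
proof -
  define z where "z = cm B *\<^sub>v y"
  define w where "w = transpose_mat (cm A) *\<^sub>v z"
  have z: "z \<in> carrier_vec m" unfolding z_def using B y by auto
  have w: "w \<in> carrier_vec p" unfolding w_def using A z by auto
  have Aw: "cm A *\<^sub>v w \<in> carrier_vec m" using A w by auto
  have BtB: "transpose_mat (cm B) * cm B = 1\<^sub>m q"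
    using oB cm_mult[of "transpose_mat B" q m B q] B by (simp add: tcm of_real_hom.mat_hom_one)
  have AtA: "transpose_mat (cm A) * cm A = 1\<^sub>m p"
    using oA cm_mult[of "transpose_mat A" p m A p] A by (simp add: tcm of_real_hom.mat_hom_one)
  have e1: "\<mu> * (y \<bullet>c y) = w \<bullet>c w"
  proof -
    have "\<mu> * (y \<bullet>c y) = (\<mu> \<cdot>\<^sub>v y) \<bullet>c y" using y by simp
    also have "\<dots> = (transpose_mat (cm B) *\<^sub>v (cm A *\<^sub>v w)) \<bullet>c y" using eq unfolding w_def z_def by simp
    also have "\<dots> = (cm A *\<^sub>v w) \<bullet>c z" unfolding z_def by (rule adj1[OF B Aw y])
    also have "\<dots> = w \<bullet>c w" using adj2[OF A w z] w_def by metis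
    finally show ?thesis .
  qed
  have e2: "z \<bullet>c z = y \<bullet>c y"
  proof -
    have "z \<bullet>c z = y \<bullet>c (transpose_mat (cm B) *\<^sub>v z)" unfolding z_def by (rule adj2[OF B y], insert B y, auto)
    also have "transpose_mat (cm B) *\<^sub>v z = y" unfolding z_def
      using assoc_mult_mat_vec[of "transpose_mat (cm B)" q m "cm B" q y] B y BtB by auto
    finally show ?thesis .
  qed
  have e3: "(cm A *\<^sub>v w) \<bullet>c z = w \<bullet>c w" using adj2[OF A w z] w_def by metis
  have e4: "(cm A *\<^sub>v w) \<bullet>c (cm A *\<^sub>v w) = w \<bullet>c w"
  proof -
    have "(cm A *\<^sub>v w) \<bullet>c (cm A *\<^sub>v w) = w \<bullet>c (transpose_mat (cm A) *\<^sub>v (cm A *\<^sub>v w))"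
      by (rule adj2[OF A w Aw])
    also have "transpose_mat (cm A) *\<^sub>v (cm A *\<^sub>v w) = w"
      using assoc_mult_mat_vec[of "transpose_mat (cm A)" p m "cm A" p w] A w AtA by auto
    finally show ?thesis .
  qed
  have ww: "0 \<le> w \<bullet>c w" by auto
  from complex_ge0_real[OF ww] have wwr: "w \<bullet>c w = of_real (Re (w \<bullet>c w))" "0 \<le> Re (w \<bullet>c w)" by auto
  have e5: "z \<bullet>c (cm A *\<^sub>v w) = w \<bullet>c w"
  proof -
    have "z \<bullet>c (cm A *\<^sub>v w) = conjugate ((cm A *\<^sub>v w) \<bullet>c z)"
      using conjugate_conjugate_sprod[OF Aw z] conjugate_vec_sprod_comm[OF z Aw] 
      by (metis conjugate_id)
    also have "\<dots> = conjugate (w \<bullet>c w)" using e3 by simp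
    also have "\<dots> = w \<bullet>c w" using wwr(1) by (metis conjugate_complex_def complex_cnj_complex_of_real)
    finally show ?thesis .
  qed
  define d where "d = z - cm A *\<^sub>v w"
  have d: "d \<in> carrier_vec m" unfolding d_def using z Aw by auto
  have ed: "d \<bullet>c d = z \<bullet>c z - w \<bullet>c w"
  proof -
    have "d \<bullet>c d = (z - cm A *\<^sub>v w) \<bullet> (conjugate z - conjugate (cm A *\<^sub>v w))"
    proof -
      have "conjugate (z - cm A *\<^sub>v w) = conjugate z - conjugate (cm A *\<^sub>v w)"
        by (rule conj_minus_vec, insert z Aw A, auto)
      thus ?thesis unfolding d_def by simp
    qed
    also have "\<dots> = z \<bullet> (conjugate z - conjugate (cm A *\<^sub>v w)) - (cm A *\<^sub>v w) \<bullet> (conjugate z - conjugate (cm A *\<^sub>v w))"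
      by (rule minus_scalar_prod_distrib[of _ m], insert z Aw, auto)
    also have "\<dots> = (z \<bullet>c z - z \<bullet>c (cm A *\<^sub>v w)) - ((cm A *\<^sub>v w) \<bullet>c z - (cm A *\<^sub>v w) \<bullet>c (cm A *\<^sub>v w))"
    proof -
      have cz: "conjugate z \<in> carrier_vec m" and cu: "conjugate (cm A *\<^sub>v w) \<in> carrier_vec m"
        using z Aw by auto
      show ?thesis by (simp only: scalar_prod_minus_distrib[OF z cz cu] scalar_prod_minus_distrib[OF Aw cz cu])
    qed
    also have "\<dots> = z \<bullet>c z - z \<bullet>c (cm A *\<^sub>v w) - (cm A *\<^sub>v w) \<bullet>c z + (cm A *\<^sub>v w) \<bullet>c (cm A *\<^sub>v w)"
      by (simp add: algebra_simps)
    also have "\<dots> = z \<bullet>c z - w \<bullet>c w" using e3 e4 e5 by simp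
    finally show ?thesis .
  qed
  have yy: "0 < y \<bullet>c y" using y y0 by simp
  have yyr: "y \<bullet>c y = of_real (Re (y \<bullet>c y))" "0 < Re (y \<bullet>c y)" using yy
    by (auto simp: less_complex_def complex_eq_iff)
  have dd: "0 \<le> d \<bullet>c d" by auto
  have le: "Re (w \<bullet>c w) \<le> Re (y \<bullet>c y)" using dd ed e2 by (auto simp: less_eq_complex_def)
  have mu: "\<mu> = of_real (Re (w \<bullet>c w) / Re (y \<bullet>c y))"
  proof -
    have "\<mu> * of_real (Re (y \<bullet>c y)) = of_real (Re (w \<bullet>c w))" using e1 yyr wwr by metis
    thus ?thesis using yyr(2) by (simp add: field_simps)
  qed
  have ne: "Re (w \<bullet>c w) \<noteq> Re (y \<bullet>c y)"
  proof
    assume eqr: "Re (w \<bullet>c w) = Re (y \<bullet>c y)"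
    hence "d \<bullet>c d = 0" using ed e2 wwr yyr by (metis diff_self)
    hence d0: "d = 0\<^sub>v m" using d by simp
    have zA: "z = cm A *\<^sub>v w"
    proof (rule eq_vecI)
      fix i assume i: "i < dim_vec (cm A *\<^sub>v w)"
      have "d $ i = 0" using d0 i Aw A by auto
      thus "z $ i = (cm A *\<^sub>v w) $ i" unfolding d_def using i z Aw by auto
    qed (insert z Aw A, auto)
    have "A *\<^sub>v map_vec Re w = B *\<^sub>v map_vec Re y"
      using arg_cong[OF zA, of "map_vec Re"] re_mv[OF A w] re_mv[OF B y] unfolding z_def by simp
    hence r: "map_vec Re y = 0\<^sub>v q" by (rule inj[rotated 2], insert w y, auto)
    have "A *\<^sub>v map_vec Im w = B *\<^sub>v map_vec Im y"
      using arg_cong[OF zA, of "map_vec Im"] im_mv[OF A w] im_mv[OF B y] unfolding z_def by simp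
    hence i: "map_vec Im y = 0\<^sub>v q" by (rule inj[rotated 2], insert w y, auto)
    have "y = 0\<^sub>v q"
    proof (rule eq_vecI)
      fix i assume "i < dim_vec (0\<^sub>v q)"
      hence "i < q" by auto
      thus "y $ i = 0\<^sub>v q $ i" using arg_cong[OF r, of "\<lambda>v. v $ i"] arg_cong[OF i, of "\<lambda>v. v $ i"] y
        by (auto simp: complex_eq_iff)
    qed (insert y, auto)
    thus False using y0 by auto
  qed
  show ?thesis
  proof (intro conjI impI)
    have Rm: "Re \<mu> = Re (w \<bullet>c w) / Re (y \<bullet>c y)" using mu by (simp only: Re_complex_of_real)
    show "\<mu> = of_real (Re \<mu>)" using mu Rm by metis
    show "0 \<le> Re \<mu>" unfolding Rm using wwr yyr by simp
    show "Re \<mu> < 1" unfolding Rm using le ne yyr by simp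
    assume "\<mu> = 0"
    hence "w \<bullet>c w = 0" using e1 by simp
    thus "transpose_mat (cm A) *\<^sub>v (cm B *\<^sub>v y) = 0\<^sub>v p" using w unfolding w_def z_def by simp
  qed
qed



lemma cm_smult: "cm (a \<cdot>\<^sub>m A) = complex_of_real a \<cdot>\<^sub>m cm A"
  by (rule eq_matI, auto)

lemma cm_add: "A \<in> carrier_mat r c \<Longrightarrow> B \<in> carrier_mat r c \<Longrightarrow> cm (A + B) = cm A + cm B"
  by (rule eq_matI, auto)

lemma smult_append: "(k::'a::comm_ring_1) \<cdot>\<^sub>v (x @\<^sub>v y) = (k \<cdot>\<^sub>v x) @\<^sub>v (k \<cdot>\<^sub>v y)"
  by (rule eq_vecI, auto)

lemma zero_append: "0\<^sub>v (n1 + n2) = (0\<^sub>v n1 :: 'a :: zero vec) @\<^sub>v 0\<^sub>v n2"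
  by (rule eq_vecI, auto)

lemma smult_mv: "A \<in> carrier_mat r c \<Longrightarrow> v \<in> carrier_vec c \<Longrightarrow> (a \<cdot>\<^sub>m A) *\<^sub>v v = (a::'a::comm_ring_1) \<cdot>\<^sub>v (A *\<^sub>v v)"
  by (rule eq_vecI) (auto simp: mult_mat_vec_def scalar_prod_def sum_distrib_left ac_simps)

definition MC :: "nat \<Rightarrow> nat \<Rightarrow> real mat \<Rightarrow> real \<Rightarrow> real \<Rightarrow> complex mat" where
  "MC n1 n2 C g1 g2 = cm (iterM n1 n2 C g1 g2)"

lemma MC_carrier: "C \<in> carrier_mat n2 n1 \<Longrightarrow> MC n1 n2 C g1 g2 \<in> carrier_mat (n1+n2) (n1+n2)"
  unfolding MC_def iterM_def by auto

lemma MC_block: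
  assumes C: "C \<in> carrier_mat n2 n1" and x: "x \<in> carrier_vec n1" and y: "y \<in> carrier_vec n2"
  shows "MC n1 n2 C g1 g2 *\<^sub>v (x @\<^sub>v y) =
    (complex_of_real (1-g1) \<cdot>\<^sub>v x + complex_of_real (-g1) \<cdot>\<^sub>v (transpose_mat (cm C) *\<^sub>v y)) @\<^sub>v
    (complex_of_real (-(g2*(1-g1))) \<cdot>\<^sub>v (cm C *\<^sub>v x) + (complex_of_real (1-g2) \<cdot>\<^sub>v y +
       complex_of_real (g1*g2) \<cdot>\<^sub>v (cm C *\<^sub>v (transpose_mat (cm C) *\<^sub>v y))))"
proof -
  let ?Ct = "transpose_mat (cm C)"
  have Ct: "?Ct \<in> carrier_mat n1 n2" and Cc: "cm C \<in> carrier_mat n2 n1" using C by auto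
  have CCt: "C * transpose_mat C \<in> carrier_mat n2 n2" using C by auto
  have e: "cm (iterM n1 n2 C g1 g2) = four_block_mat (complex_of_real (1-g1) \<cdot>\<^sub>m 1\<^sub>m n1)
     (complex_of_real (-g1) \<cdot>\<^sub>m ?Ct) (complex_of_real (-(g2*(1-g1))) \<cdot>\<^sub>m cm C)
     (complex_of_real (1-g2) \<cdot>\<^sub>m 1\<^sub>m n2 + complex_of_real (g1*g2) \<cdot>\<^sub>m (cm C * ?Ct))"
    unfolding iterM_def
    apply (subst map_four_block_mat)
    using C CCt apply (auto simp: cm_smult of_real_hom.mat_hom_one tcm)
    apply (subst cm_add[of _ n2 n2])
    using CCt by (auto simp: cm_smult of_real_hom.mat_hom_one cm_mult[of C n2 n1 "transpose_mat C" n2])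
  show ?thesis unfolding MC_def e
    apply (subst four_block_mat_mult_vec[OF _ _ _ _ x y])
    using C Ct Cc x y
    by (auto simp: add_mult_distrib_mat_vec[of _ n2 n2] assoc_mult_mat_vec[of _ n2 n1 _ n2]
      smult_mv[of _ n1 n1] smult_mv[of _ n2 n2] smult_mv[of _ n1 n2] smult_mv[of _ n2 n1])
qed



lemma dim_MC: "C \<in> carrier_mat n2 n1 \<Longrightarrow> dim_row (MC n1 n2 C g1 g2) = n1+n2"
  using MC_carrier by blast

lemma eig_intro:
  assumes C: "C \<in> carrier_mat n2 n1" and x: "x \<in> carrier_vec n1" and y: "y \<in> carrier_vec n2"
    and nz: "x \<noteq> 0\<^sub>v n1 \<or> y \<noteq> 0\<^sub>v n2"
    and e1: "complex_of_real (1-g1) \<cdot>\<^sub>v x + complex_of_real (-g1) \<cdot>\<^sub>v (transpose_mat (cm C) *\<^sub>v y) = lam \<cdot>\<^sub>v x"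
    and e2: "complex_of_real (-(g2*(1-g1))) \<cdot>\<^sub>v (cm C *\<^sub>v x) + (complex_of_real (1-g2) \<cdot>\<^sub>v y +
       complex_of_real (g1*g2) \<cdot>\<^sub>v (cm C *\<^sub>v (transpose_mat (cm C) *\<^sub>v y))) = lam \<cdot>\<^sub>v y"
  shows "eigenvalue (MC n1 n2 C g1 g2) lam"
  unfolding eigenvalue_def eigenvector_def
proof (intro exI conjI)
  show "x @\<^sub>v y \<in> carrier_vec (dim_row (MC n1 n2 C g1 g2))" unfolding dim_MC[OF C] using x y by auto
  show "x @\<^sub>v y \<noteq> 0\<^sub>v (dim_row (MC n1 n2 C g1 g2))"
    unfolding dim_MC[OF C] zero_append[of n1 n2] using nz x y by (subst append_vec_eq[OF x], auto)
  show "MC n1 n2 C g1 g2 *\<^sub>v (x @\<^sub>v y) = lam \<cdot>\<^sub>v (x @\<^sub>v y)"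
    unfolding MC_block[OF C x y] e1 e2 smult_append ..
qed

lemma eig_elim:
  assumes C: "C \<in> carrier_mat n2 n1" and ev: "eigenvalue (MC n1 n2 C g1 g2) lam"
  shows "\<exists>x y. x \<in> carrier_vec n1 \<and> y \<in> carrier_vec n2 \<and> (x \<noteq> 0\<^sub>v n1 \<or> y \<noteq> 0\<^sub>v n2) \<and>
    complex_of_real (1-g1) \<cdot>\<^sub>v x + complex_of_real (-g1) \<cdot>\<^sub>v (transpose_mat (cm C) *\<^sub>v y) = lam \<cdot>\<^sub>v x \<and>
    complex_of_real (-(g2*(1-g1))) \<cdot>\<^sub>v (cm C *\<^sub>v x) + (complex_of_real (1-g2) \<cdot>\<^sub>v y +
       complex_of_real (g1*g2) \<cdot>\<^sub>v (cm C *\<^sub>v (transpose_mat (cm C) *\<^sub>v y))) = lam \<cdot>\<^sub>v y"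
proof -
  from ev obtain v where v: "v \<in> carrier_vec (n1+n2)" and v0: "v \<noteq> 0\<^sub>v (n1+n2)"
    and Mv: "MC n1 n2 C g1 g2 *\<^sub>v v = lam \<cdot>\<^sub>v v"
    unfolding eigenvalue_def eigenvector_def using MC_carrier[OF C, of g1 g2] by auto
  define x where "x = vec_first v n1"
  define y where "y = vec_last v n2"
  have x: "x \<in> carrier_vec n1" and y: "y \<in> carrier_vec n2" unfolding x_def y_def by auto
  have vxy: "v = x @\<^sub>v y" unfolding x_def y_def using v by simp
  have nz: "x \<noteq> 0\<^sub>v n1 \<or> y \<noteq> 0\<^sub>v n2" using v0 unfolding vxy zero_append by auto
  have eqn: "(complex_of_real (1-g1) \<cdot>\<^sub>v x + complex_of_real (-g1) \<cdot>\<^sub>v (transpose_mat (cm C) *\<^sub>v y)) @\<^sub>v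
    (complex_of_real (-(g2*(1-g1))) \<cdot>\<^sub>v (cm C *\<^sub>v x) + (complex_of_real (1-g2) \<cdot>\<^sub>v y +
       complex_of_real (g1*g2) \<cdot>\<^sub>v (cm C *\<^sub>v (transpose_mat (cm C) *\<^sub>v y)))) = (lam \<cdot>\<^sub>v x) @\<^sub>v (lam \<cdot>\<^sub>v y)"
    using Mv unfolding vxy MC_block[OF C x y] smult_append .
  have lx: "lam \<cdot>\<^sub>v x \<in> carrier_vec n1" using x by simp
  have c1: "complex_of_real (1-g1) \<cdot>\<^sub>v x + complex_of_real (-g1) \<cdot>\<^sub>v (transpose_mat (cm C) *\<^sub>v y) \<in> carrier_vec n1"
    using x y C by auto
  have "complex_of_real (1-g1) \<cdot>\<^sub>v x + complex_of_real (-g1) \<cdot>\<^sub>v (transpose_mat (cm C) *\<^sub>v y) = lam \<cdot>\<^sub>v x \<and>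
    complex_of_real (-(g2*(1-g1))) \<cdot>\<^sub>v (cm C *\<^sub>v x) + (complex_of_real (1-g2) \<cdot>\<^sub>v y +
       complex_of_real (g1*g2) \<cdot>\<^sub>v (cm C *\<^sub>v (transpose_mat (cm C) *\<^sub>v y))) = lam \<cdot>\<^sub>v y"
    using append_vec_eq[OF c1 lx] eqn by blast
  thus ?thesis using x y nz by blast
qed



lemma L1:
  assumes C: "C \<in> carrier_mat n2 n1" and y: "y \<in> carrier_vec n2"
    and u0: "transpose_mat (cm C) *\<^sub>v y \<noteq> 0\<^sub>v n1"
    and Cy: "cm C *\<^sub>v (transpose_mat (cm C) *\<^sub>v y) = complex_of_real \<mu> \<cdot>\<^sub>v y"
    and g1: "g1 \<noteq> 0"
    and quad: "lam^2 - complex_of_real (2-g1-g2+g1*g2*\<mu>) * lam + complex_of_real ((1-g1)*(1-g2)) = 0"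
  shows "eigenvalue (MC n1 n2 C g1 g2) lam"
proof -
  define u where "u = transpose_mat (cm C) *\<^sub>v y"
  define a where "a = complex_of_real (1-g1) - lam"
  have u: "u \<in> carrier_vec n1" unfolding u_def using C y by auto
  have Ct: "transpose_mat (cm C) \<in> carrier_mat n1 n2" and Cc: "cm C \<in> carrier_mat n2 n1" using C by auto
  have r1: "transpose_mat (cm C) *\<^sub>v (a \<cdot>\<^sub>v y) = a \<cdot>\<^sub>v u" unfolding u_def using mult_mat_vec[OF Ct y] .
  have r2: "cm C *\<^sub>v (complex_of_real g1 \<cdot>\<^sub>v u) = complex_of_real g1 \<cdot>\<^sub>v (complex_of_real \<mu> \<cdot>\<^sub>v y)"
    using mult_mat_vec[OF Cc u] Cy unfolding u_def by simp
  have r3: "cm C *\<^sub>v (a \<cdot>\<^sub>v u) = a \<cdot>\<^sub>v (complex_of_real \<mu> \<cdot>\<^sub>v y)"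
    using mult_mat_vec[OF Cc u] Cy unfolding u_def by simp
  have key: "\<And>t. complex_of_real (-(g2*(1-g1))) * (complex_of_real g1 * (complex_of_real \<mu> * t)) +
      (complex_of_real (1-g2) * (a * t) + complex_of_real (g1*g2) * (a * (complex_of_real \<mu> * t))) =
      lam * (a * t)"
  proof -
    fix t
    have "complex_of_real (-(g2*(1-g1))) * (complex_of_real g1 * (complex_of_real \<mu> * t)) +
      (complex_of_real (1-g2) * (a * t) + complex_of_real (g1*g2) * (a * (complex_of_real \<mu> * t))) -
      lam * (a * t) = t * (lam^2 - complex_of_real (2-g1-g2+g1*g2*\<mu>) * lam + complex_of_real ((1-g1)*(1-g2)))"
      unfolding a_def by (simp add: algebra_simps power2_eq_square)
    thus "?thesis t" using quad by simp
  qed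
  have xc: "complex_of_real g1 \<cdot>\<^sub>v u \<in> carrier_vec n1" using u by simp
  have yc: "a \<cdot>\<^sub>v y \<in> carrier_vec n2" using y by simp
  show ?thesis
  proof (rule eig_intro[OF C xc yc])
    show "complex_of_real g1 \<cdot>\<^sub>v u \<noteq> 0\<^sub>v n1 \<or> a \<cdot>\<^sub>v y \<noteq> 0\<^sub>v n2"
    proof (rule disjI1)
      show "complex_of_real g1 \<cdot>\<^sub>v u \<noteq> 0\<^sub>v n1"
      proof
        assume h: "complex_of_real g1 \<cdot>\<^sub>v u = 0\<^sub>v n1"
        have "u = 0\<^sub>v n1"
        proof (rule eq_vecI)
          fix i assume "i < dim_vec (0\<^sub>v n1)"
          hence i: "i < n1" by simp
          have "complex_of_real g1 * u $ i = 0" using arg_cong[OF h, of "\<lambda>v. v $ i"] i u by simp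
          thus "u $ i = 0\<^sub>v n1 $ i" using g1 i by simp
        qed (insert u, auto)
        thus False using u0 unfolding u_def by simp
      qed
    qed
    show "complex_of_real (1 - g1) \<cdot>\<^sub>v (complex_of_real g1 \<cdot>\<^sub>v u) + complex_of_real (- g1) \<cdot>\<^sub>v (transpose_mat (cm C) *\<^sub>v (a \<cdot>\<^sub>v y)) =
      lam \<cdot>\<^sub>v (complex_of_real g1 \<cdot>\<^sub>v u)"
      unfolding r1 by (rule eq_vecI, insert u, auto simp: a_def algebra_simps)
    show "complex_of_real (- (g2 * (1 - g1))) \<cdot>\<^sub>v (cm C *\<^sub>v (complex_of_real g1 \<cdot>\<^sub>v u)) +
      (complex_of_real (1 - g2) \<cdot>\<^sub>v (a \<cdot>\<^sub>v y) + complex_of_real (g1 * g2) \<cdot>\<^sub>v (cm C *\<^sub>v (transpose_mat (cm C) *\<^sub>v (a \<cdot>\<^sub>v y)))) =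
      lam \<cdot>\<^sub>v (a \<cdot>\<^sub>v y)"
      unfolding r1 r2 r3 
    proof (rule eq_vecI)
      fix i assume "i < dim_vec (lam \<cdot>\<^sub>v (a \<cdot>\<^sub>v y))"
      hence i: "i < n2" using y by simp
      show "(complex_of_real (- (g2 * (1 - g1))) \<cdot>\<^sub>v (complex_of_real g1 \<cdot>\<^sub>v (complex_of_real \<mu> \<cdot>\<^sub>v y)) +
        (complex_of_real (1 - g2) \<cdot>\<^sub>v (a \<cdot>\<^sub>v y) + complex_of_real (g1 * g2) \<cdot>\<^sub>v (a \<cdot>\<^sub>v (complex_of_real \<mu> \<cdot>\<^sub>v y)))) $ i =
        (lam \<cdot>\<^sub>v (a \<cdot>\<^sub>v y)) $ i"
        using i y key[of "y $ i"] by simp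
    qed (insert y, auto)
  qed
qed

lemma mv0: "A \<in> carrier_mat r c \<Longrightarrow> A *\<^sub>v 0\<^sub>v c = (0\<^sub>v r :: 'a::comm_ring_1 vec)"
  by (rule eq_vecI, auto simp: scalar_prod_def)

lemma L2:
  assumes C: "C \<in> carrier_mat n2 n1" and y: "y \<in> carrier_vec n2" and y0: "y \<noteq> 0\<^sub>v n2"
    and Ct0: "transpose_mat (cm C) *\<^sub>v y = 0\<^sub>v n1"
  shows "eigenvalue (MC n1 n2 C g1 g2) (complex_of_real (1-g2))"
  by (rule eig_intro[OF C zero_carrier_vec y], insert y0 Ct0 C y, auto simp: mv0[of _ n2 n1])

lemma L3:
  assumes C: "C \<in> carrier_mat n2 n1" and x: "x \<in> carrier_vec n1" and x0: "x \<noteq> 0\<^sub>v n1"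
    and C0: "cm C *\<^sub>v x = 0\<^sub>v n2"
  shows "eigenvalue (MC n1 n2 C g1 g2) (complex_of_real (1-g1))"
  by (rule eig_intro[OF C x zero_carrier_vec], insert x0 C0 C x, auto simp: mv0[of _ n2 n1] mv0[of _ n1 n2])



lemma smult_zero_nz:
  assumes x: "x \<in> carrier_vec n" and x0: "x \<noteq> 0\<^sub>v n" and k: "k \<cdot>\<^sub>v x = 0\<^sub>v n"
  shows "(k :: complex) = 0"
proof -
  obtain i where i: "i < n" and xi: "x $ i \<noteq> 0"
  proof -
    have "\<exists>i<n. x $ i \<noteq> 0"
    proof (rule ccontr)
      assume "\<not> ?thesis"
      hence "x = 0\<^sub>v n" using x by (intro eq_vecI, auto)
      thus False using x0 by simp
    qed
    thus ?thesis using that by blast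
  qed
  have "k * x $ i = 0" using arg_cong[OF k, of "\<lambda>v. v $ i"] i x by simp
  thus ?thesis using xi by simp
qed

lemma Ua:
  assumes C: "C \<in> carrier_mat n2 n1" and g2: "g2 \<noteq> 0" and ev: "eigenvalue (MC n1 n2 C 1 g2) lam"
  shows "lam = 0 \<or> (\<exists>y \<mu>. y \<in> carrier_vec n2 \<and> y \<noteq> 0\<^sub>v n2 \<and>
     cm C *\<^sub>v (transpose_mat (cm C) *\<^sub>v y) = \<mu> \<cdot>\<^sub>v y \<and> lam = complex_of_real (1-g2) + complex_of_real g2 * \<mu>)"
proof -
  from eig_elim[OF C ev] obtain x y where x: "x \<in> carrier_vec n1" and y: "y \<in> carrier_vec n2"
    and nz: "x \<noteq> 0\<^sub>v n1 \<or> y \<noteq> 0\<^sub>v n2"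
    and e1: "complex_of_real (1-1) \<cdot>\<^sub>v x + complex_of_real (-1) \<cdot>\<^sub>v (transpose_mat (cm C) *\<^sub>v y) = lam \<cdot>\<^sub>v x"
    and e2: "complex_of_real (-(g2*(1-1))) \<cdot>\<^sub>v (cm C *\<^sub>v x) + (complex_of_real (1-g2) \<cdot>\<^sub>v y +
       complex_of_real (1*g2) \<cdot>\<^sub>v (cm C *\<^sub>v (transpose_mat (cm C) *\<^sub>v y))) = lam \<cdot>\<^sub>v y"
    by blast
  have Ct: "transpose_mat (cm C) \<in> carrier_mat n1 n2" and Cc: "cm C \<in> carrier_mat n2 n1" using C by auto
  show ?thesis
  proof (cases "y = 0\<^sub>v n2")
    case True
    hence x0: "x \<noteq> 0\<^sub>v n1" using nz by auto
    have "lam \<cdot>\<^sub>v x = 0\<^sub>v n1" using e1[symmetric] unfolding True mv0[OF Ct] using x by auto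
    thus ?thesis using smult_zero_nz[OF x x0] by auto
  next
    case False
    define \<mu> where "\<mu> = (lam - complex_of_real (1-g2)) / complex_of_real g2"
    have w: "cm C *\<^sub>v (transpose_mat (cm C) *\<^sub>v y) \<in> carrier_vec n2" using C y by auto
    have "cm C *\<^sub>v (transpose_mat (cm C) *\<^sub>v y) = \<mu> \<cdot>\<^sub>v y"
    proof (rule eq_vecI)
      fix i assume "i < dim_vec (\<mu> \<cdot>\<^sub>v y)"
      hence i: "i < n2" using y by auto
      have "(1 - complex_of_real g2) * y $ i + complex_of_real g2 * (cm C *\<^sub>v (transpose_mat (cm C) *\<^sub>v y)) $ i = lam * y $ i"
        using arg_cong[OF e2, of "\<lambda>v. v $ i"] i y w Cc x by simp
      thus "(cm C *\<^sub>v (transpose_mat (cm C) *\<^sub>v y)) $ i = (\<mu> \<cdot>\<^sub>v y) $ i"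
        using i y g2 unfolding \<mu>_def by (simp add: field_simps)
    qed (insert w y C, auto)
    moreover have "lam = complex_of_real (1-g2) + complex_of_real g2 * \<mu>" unfolding \<mu>_def using g2 by simp
    ultimately show ?thesis using y False by blast
  qed
qed

lemma Ub:
  assumes C: "C \<in> carrier_mat n2 n1" and g1: "g1 \<noteq> 0" and ev: "eigenvalue (MC n1 n2 C g1 1) lam"
  shows "lam = 0 \<or> (\<exists>x \<nu>. x \<in> carrier_vec n1 \<and> x \<noteq> 0\<^sub>v n1 \<and>
     transpose_mat (cm C) *\<^sub>v (cm C *\<^sub>v x) = \<nu> \<cdot>\<^sub>v x \<and> lam = complex_of_real (1-g1) + complex_of_real g1 * \<nu>)"
proof -
  from eig_elim[OF C ev] obtain x y where x: "x \<in> carrier_vec n1" and y: "y \<in> carrier_vec n2"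
    and nz: "x \<noteq> 0\<^sub>v n1 \<or> y \<noteq> 0\<^sub>v n2"
    and e1: "complex_of_real (1-g1) \<cdot>\<^sub>v x + complex_of_real (-g1) \<cdot>\<^sub>v (transpose_mat (cm C) *\<^sub>v y) = lam \<cdot>\<^sub>v x"
    and e2: "complex_of_real (-(1*(1-g1))) \<cdot>\<^sub>v (cm C *\<^sub>v x) + (complex_of_real (1-1) \<cdot>\<^sub>v y +
       complex_of_real (g1*1) \<cdot>\<^sub>v (cm C *\<^sub>v (transpose_mat (cm C) *\<^sub>v y))) = lam \<cdot>\<^sub>v y"
    by blast
  have Ct: "transpose_mat (cm C) \<in> carrier_mat n1 n2" and Cc: "cm C \<in> carrier_mat n2 n1" using C by auto
  have u: "transpose_mat (cm C) *\<^sub>v y \<in> carrier_vec n1" using Ct y by auto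
  have Cx: "cm C *\<^sub>v x \<in> carrier_vec n2" using Cc x by auto
  have e1': "cm C *\<^sub>v (complex_of_real (1-g1) \<cdot>\<^sub>v x + complex_of_real (-g1) \<cdot>\<^sub>v (transpose_mat (cm C) *\<^sub>v y))
    = complex_of_real (1-g1) \<cdot>\<^sub>v (cm C *\<^sub>v x) + complex_of_real (-g1) \<cdot>\<^sub>v (cm C *\<^sub>v (transpose_mat (cm C) *\<^sub>v y))"
    using Cc x u by (simp add: mult_add_distrib_mat_vec mult_mat_vec)
  have e1'': "cm C *\<^sub>v (lam \<cdot>\<^sub>v x) = lam \<cdot>\<^sub>v (cm C *\<^sub>v x)" using mult_mat_vec[OF Cc x] .
  have w: "cm C *\<^sub>v (transpose_mat (cm C) *\<^sub>v y) \<in> carrier_vec n2" using C y by auto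
  show ?thesis
  proof (cases "lam = 0")
    case False
    have yx: "y = (-1) \<cdot>\<^sub>v (cm C *\<^sub>v x)"
    proof (rule eq_vecI)
      fix i assume "i < dim_vec ((-1) \<cdot>\<^sub>v (cm C *\<^sub>v x))"
      hence i: "i < n2" using Cx C by auto
      have a: "(1 - complex_of_real g1) * (cm C *\<^sub>v x) $ i - complex_of_real g1 * (cm C *\<^sub>v (transpose_mat (cm C) *\<^sub>v y)) $ i
          = lam * (cm C *\<^sub>v x) $ i"
        using arg_cong[OF arg_cong[OF e1, of "\<lambda>v. cm C *\<^sub>v v"], of "\<lambda>v. v $ i"] unfolding e1' e1''
        using i w Cx C by simp
      have b: "- ((1 - complex_of_real g1) * (cm C *\<^sub>v x) $ i) + complex_of_real g1 * (cm C *\<^sub>v (transpose_mat (cm C) *\<^sub>v y)) $ i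
          = lam * y $ i"
        using arg_cong[OF e2, of "\<lambda>v. v $ i"] i w Cx y C by (simp add: algebra_simps)
      from a b have "lam * (y $ i + (cm C *\<^sub>v x) $ i) = 0" by (simp add: algebra_simps)
      hence "y $ i = - (cm C *\<^sub>v x) $ i" using False by (simp add: add_eq_0_iff)
      thus "y $ i = ((-1) \<cdot>\<^sub>v (cm C *\<^sub>v x)) $ i" using i Cx C by simp
    qed (insert y Cx C, auto)
    have Cty: "transpose_mat (cm C) *\<^sub>v y = (-1) \<cdot>\<^sub>v (transpose_mat (cm C) *\<^sub>v (cm C *\<^sub>v x))"
      unfolding yx using mult_mat_vec[OF Ct Cx] .
    have x0: "x \<noteq> 0\<^sub>v n1"
    proof
      assume "x = 0\<^sub>v n1"
      hence "y = 0\<^sub>v n2" unfolding yx using mv0[OF Cc] by auto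
      thus False using nz \<open>x = 0\<^sub>v n1\<close> by auto
    qed
    define \<nu> where "\<nu> = (lam - complex_of_real (1-g1)) / complex_of_real g1"
    have v: "transpose_mat (cm C) *\<^sub>v (cm C *\<^sub>v x) \<in> carrier_vec n1" using Ct Cx by auto
    have "transpose_mat (cm C) *\<^sub>v (cm C *\<^sub>v x) = \<nu> \<cdot>\<^sub>v x"
    proof (rule eq_vecI)
      fix i assume "i < dim_vec (\<nu> \<cdot>\<^sub>v x)"
      hence i: "i < n1" using x by auto
      have "(1 - complex_of_real g1) * x $ i + complex_of_real g1 * (transpose_mat (cm C) *\<^sub>v (cm C *\<^sub>v x)) $ i = lam * x $ i"
        using arg_cong[OF e1, of "\<lambda>v. v $ i"] unfolding Cty using i x v C by simp
      thus "(transpose_mat (cm C) *\<^sub>v (cm C *\<^sub>v x)) $ i = (\<nu> \<cdot>\<^sub>v x) $ i"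
        using i x g1 unfolding \<nu>_def by (simp add: field_simps)
    qed (insert v x C, auto)
    moreover have "lam = complex_of_real (1-g1) + complex_of_real g1 * \<nu>" unfolding \<nu>_def using g1 by simp
    ultimately show ?thesis using x x0 by blast
  qed simp
qed


lemma K0:
  fixes a b s :: real
  assumes a: "0 \<le> a" "a < 1" and b: "0 \<le> b" "b < 1" and s: "0 \<le> s" "s \<le> 1"
    and p: "s^2 - (a+b+(1-a)*(1-b)*s)*s + a*b > 0"
  shows "s^2 \<le> a*b"
proof (rule ccontr)
  assume "\<not> ?thesis"
  hence lt: "a*b < s^2" by simp
  have fac: "s^2 - (a+b+(1-a)*(1-b)*s)*s + a*b = (1-s)*(a*b*(1+s) - (a+b)*s)"
    by (simp add: algebra_simps power2_eq_square)
  have s1: "s < 1" using p fac s by (cases "s = 1", auto)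
  have q: "a*b*(1+s) > (a+b)*s" using p fac s1 by (simp add: zero_less_mult_iff)
  have "(a+b)*s \<ge> 0" using a b s by simp
  hence "(a*b)*(1+s) > 0" using q by linarith
  moreover have "1+s > 0" using s by simp
  ultimately have ab0: "a*b > 0" by (simp add: zero_less_mult_iff)
  define t where "t = sqrt (a*b)"
  have t0: "t > 0" unfolding t_def using ab0 by simp
  have tt: "t^2 = a*b" unfolding t_def using ab0 by simp
  have amgm: "a + b \<ge> 2*t"
  proof -
    have "(sqrt a - sqrt b)^2 \<ge> 0" by simp
    hence "a + b - 2 * sqrt a * sqrt b \<ge> 0" using a b by (simp add: power2_eq_square algebra_simps)
    thus ?thesis unfolding t_def using a b by (simp add: real_sqrt_mult)
  qed
  have "2*t*s \<le> (a+b)*s" by (rule mult_right_mono, insert amgm s, auto)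
  hence "t*(t*(1+s)) > t*(2*s)" using q tt by (simp add: power2_eq_square algebra_simps)
  hence A: "t*(1+s) > 2*s" using t0 by (simp add: mult_less_cancel_left_pos)
  have ts: "t < s" using power2_less_imp_less[of t s] lt tt s by simp
  have "t*(1+s) \<le> s*(1+s)" by (rule mult_right_mono, insert ts s, auto)
  hence "s*s > s" using A by (simp add: algebra_simps)
  moreover have "s*s \<le> s*1" by (rule mult_left_mono, insert s, auto)
  ultimately show False by simp
qed

lemma R0:
  fixes g1 g2 s :: real
  assumes g1: "0 < g1" "g1 \<le> 1" and g2: "0 < g2" "g2 \<le> 1" and s: "0 \<le> s" "s \<le> 1"
  shows "\<exists>lam::complex. lam^2 - of_real (2-g1-g2+g1*g2*s) * lam + of_real ((1-g1)*(1-g2)) = 0 \<and> s \<le> cmod lam"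
proof -
  define a where "a = 1 - g1"
  define b where "b = 1 - g2"
  define T where "T = 2-g1-g2+g1*g2*s"
  define D where "D = (1-g1)*(1-g2)"
  define disc where "disc = T^2 - 4*D"
  have a: "0 \<le> a" "a < 1" and b: "0 \<le> b" "b < 1" using g1 g2 unfolding a_def b_def by auto
  have TD: "T = a+b+(1-a)*(1-b)*s" "D = a*b" unfolding T_def D_def a_def b_def by (auto simp: algebra_simps)
  have T0: "T \<ge> 0" unfolding TD using a b s by simp
  have D0: "D \<ge> 0" unfolding TD using a b by simp
  have ps: "s^2 - T*s + D = (s - T/2)^2 - disc/4" unfolding disc_def by (simp add: power2_eq_square field_simps)
  show ?thesis
  proof (cases "disc \<ge> 0")
    case True
    define l where "l = (T + sqrt disc)/2"
    have sq: "sqrt disc * sqrt disc = disc" using True by simp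
    have quad: "l^2 - T*l + D = 0" unfolding l_def using sq disc_def
      by (simp add: power2_eq_square field_simps)
    have lT: "l \<ge> T/2" unfolding l_def using True by simp
    have sl: "s \<le> l"
    proof (cases "s^2 - T*s + D \<le> 0")
      case True
      hence "(2*s - T)^2 \<le> disc" using ps by (simp add: power2_eq_square field_simps)
      hence "2*s - T \<le> sqrt disc" by (rule real_le_rsqrt)
      thus ?thesis unfolding l_def by simp
    next
      case False
      hence "s^2 \<le> D" unfolding TD using K0[OF a b s] by (simp add: algebra_simps)
      moreover have "D \<le> l^2"
      proof -
        have "T*l \<le> (2*l)*l" by (rule mult_right_mono, insert lT T0, auto)
        thus ?thesis using quad by (simp add: power2_eq_square)
      qed
      ultimately have "s^2 \<le> l^2" by simp
      thus ?thesis using power2_le_imp_le[of s l] lT T0 by simp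
    qed
    show ?thesis
    proof (intro exI conjI)
      have "(complex_of_real l)^2 - complex_of_real T * complex_of_real l + complex_of_real D = complex_of_real (l^2 - T*l + D)"
        by simp
      thus "(complex_of_real l)^2 - complex_of_real (2-g1-g2+g1*g2*s) * complex_of_real l + complex_of_real ((1-g1)*(1-g2)) = 0"
        using quad unfolding T_def D_def by simp
      show "s \<le> cmod (complex_of_real l)" using sl by simp
    qed
  next
    case False
    define lam where "lam = Complex (T/2) (sqrt (-disc)/2)"
    have sq: "sqrt (-disc) * sqrt (-disc) = -disc" using False by simp
    have quad: "lam^2 - complex_of_real T * lam + complex_of_real D = 0"
      unfolding lam_def using sq disc_def
      by (simp add: complex_eq_iff power2_eq_square field_simps)
    have nm: "cmod lam = sqrt D"
    proof -
      have "(T/2)^2 + (sqrt (-disc)/2)^2 = D" using sq disc_def by (simp add: power2_eq_square field_simps)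
      thus ?thesis unfolding lam_def cmod_def by simp
    qed
    have "(s - T/2)^2 \<ge> 0" by simp
    hence "s^2 - T*s + D > 0" using ps False by linarith
    hence "s^2 \<le> D" unfolding TD using K0[OF a b s] by (simp add: algebra_simps)
    hence "s \<le> sqrt D" using s by (simp add: real_le_rsqrt)
    thus ?thesis using quad nm unfolding T_def D_def by auto
  qed
qed

lemma R1:
  fixes u g l h :: real
  assumes u: "0 < u" "u \<le> 1" and g: "1 \<le> g" and lh: "0 \<le> l" "l < h" "h < 1"
    and gs: "g \<le> 2/(2-h-l)"
  shows "\<exists>lam::real. lam^2 - (2-u-g+u*g*h)*lam + (1-u)*(1-g) = 0 \<and> (h-l)/(2-h-l) \<le> lam"
proof -
  define den where "den = 2-h-l"
  define r where "r = (h-l)/den"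
  define T where "T = 2-u-g+u*g*h"
  define D where "D = (1-u)*(1-g)"
  define disc where "disc = T^2 - 4*D"
  have den: "den > 0" unfolding den_def using lh by simp
  have rden: "r * den = h - l" unfolding r_def using den by simp
  have r0: "r \<ge> 0" unfolding r_def using den lh by simp
  have r1: "r \<le> 1" unfolding r_def using den lh by (simp add: pos_divide_le_eq den_def)
  have D0: "D \<le> 0" unfolding D_def using u g by (simp add: mult_nonneg_nonpos)
  have disc0: "disc \<ge> 0" unfolding disc_def using D0 by (smt (verit) zero_le_power2)
  have pr: "r^2 - T*r + D = (1-u)*((r-1)*(r-1+g)) + u*(r*(r-(1-g*(1-h))))"
    unfolding T_def D_def by (simp add: power2_eq_square algebra_simps)
  have E0: "(r-1)*(r-1+g) \<le> 0" using r0 r1 g by (simp add: mult_nonpos_nonneg)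
  have gh: "g*(1-h) \<le> (2/den)*(1-h)" by (rule mult_right_mono, insert gs lh, auto simp: den_def)
  have "(2/den)*(1-h) = 1 - r" unfolding r_def using den by (simp add: field_simps den_def)
  hence "r - (1-g*(1-h)) \<le> 0" using gh by simp
  hence E1: "r*(r-(1-g*(1-h))) \<le> 0" using r0 by (simp add: mult_nonneg_nonpos)
  have "r^2 - T*r + D \<le> 0" unfolding pr using E0 E1 u
    by (smt (verit) mult_nonneg_nonpos)
  hence "(2*r - T)^2 \<le> disc" unfolding disc_def by (simp add: power2_eq_square algebra_simps)
  hence "2*r - T \<le> sqrt disc" by (rule real_le_rsqrt)
  hence rl: "r \<le> (T + sqrt disc)/2" by simp
  have sq: "sqrt disc * sqrt disc = disc" using disc0 by simp
  have quad: "((T + sqrt disc)/2)^2 - T*((T + sqrt disc)/2) + D = 0" using sq disc_def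
    by (simp add: power2_eq_square field_simps)
  show ?thesis using quad rl unfolding T_def D_def r_def den_def by blast
qed

lemma R2:
  fixes u g l h :: real
  assumes u: "0 < u" "u \<le> 1" and lh: "0 \<le> l" "l < h" "h < 1"
    and gs: "2/(2-h-l) \<le> g"
  shows "\<exists>lam::real. lam^2 - (2-u-g+u*g*l)*lam + (1-u)*(1-g) = 0 \<and> lam \<le> -((h-l)/(2-h-l))"
proof -
  define den where "den = 2-h-l"
  define r where "r = (h-l)/den"
  define T where "T = 2-u-g+u*g*l"
  define D where "D = (1-u)*(1-g)"
  define disc where "disc = T^2 - 4*D"
  have den: "den > 0" unfolding den_def using lh by simp
  have r0: "r \<ge> 0" unfolding r_def using den lh by simp
  have r1: "1 + r = (2 - 2*l)/den" unfolding r_def using den by (simp add: field_simps den_def)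
  have g1: "1 \<le> 2/den" using den lh by (simp add: pos_le_divide_eq den_def)
  have g1r: "1 + r \<le> g"
  proof -
    have "(2 - 2*l)/den \<le> 2/den" using den lh by (simp add: divide_right_mono)
    thus ?thesis using r1 gs unfolding den_def by simp
  qed
  have D0: "D \<le> 0" unfolding D_def using u g1 gs den_def by (simp add: mult_nonneg_nonpos)
  have disc0: "disc \<ge> 0" unfolding disc_def using D0 by (smt (verit) zero_le_power2)
  have pr: "r^2 + T*r + D = (1-u)*((-r-1)*(-r-1+g)) + u*((-r)*(-r-(1-g*(1-l))))"
    unfolding T_def D_def by (simp add: power2_eq_square algebra_simps)
  have E0: "(-r-1)*(-r-1+g) \<le> 0" using r0 g1r by (simp add: mult_nonpos_nonneg)
  have gl: "(2/den)*(1-l) \<le> g*(1-l)" by (rule mult_right_mono, insert gs lh, auto simp: den_def)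
  have "(2/den)*(1-l) = 1 + r" using r1 by (simp add: field_simps)
  hence "-r-(1-g*(1-l)) \<ge> 0" using gl by simp
  hence E1: "(-r)*(-r-(1-g*(1-l))) \<le> 0" using r0 by (simp add: mult_nonpos_nonneg)
  have "r^2 + T*r + D \<le> 0" unfolding pr using E0 E1 u
    by (smt (verit) mult_nonneg_nonpos)
  hence "(2*r + T)^2 \<le> disc" unfolding disc_def by (simp add: power2_eq_square algebra_simps)
  hence "2*r + T \<le> sqrt disc" by (rule real_le_rsqrt)
  hence rl: "(T - sqrt disc)/2 \<le> -r" by simp
  have sq: "sqrt disc * sqrt disc = disc" using disc0 by simp
  have quad: "((T - sqrt disc)/2)^2 - T*((T - sqrt disc)/2) + D = 0" using sq disc_def
    by (simp add: power2_eq_square field_simps)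
  show ?thesis using quad rl unfolding T_def D_def r_def den_def by blast
qed

lemma R3:
  fixes g l h :: real
  assumes lh: "0 \<le> l" "l \<le> h" "h < 1" and gs: "2/(2-h-l) \<le> g"
  shows "1 - g \<le> -((h-l)/(2-h-l))"
proof -
  have den: "2-h-l > 0" using lh by simp
  have "1 - 2/(2-h-l) = -((h+l)/(2-h-l))" using den by (simp add: field_simps)
  moreover have "(h-l)/(2-h-l) \<le> (h+l)/(2-h-l)" using den lh by (simp add: divide_right_mono)
  ultimately show ?thesis using gs by simp
qed

lemma R4:
  fixes l h mu :: real
  assumes lh: "0 \<le> l" "l \<le> mu" "mu \<le> h" "h < 1"
  shows "\<bar>1 - (2/(2-h-l))*(1-mu)\<bar> \<le> (h-l)/(2-h-l)" "1 \<le> 2/(2-h-l)"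
proof -
  have den: "2-h-l > 0" using lh by simp
  have e: "1 - (2/(2-h-l))*(1-mu) = (2*mu - h - l)/(2-h-l)" using den by (simp add: field_simps)
  have "\<bar>2*mu - h - l\<bar> \<le> h - l" using lh by simp
  hence "\<bar>2*mu - h - l\<bar>/(2-h-l) \<le> (h-l)/(2-h-l)" using den by (simp add: divide_right_mono)
  thus "\<bar>1 - (2/(2-h-l))*(1-mu)\<bar> \<le> (h-l)/(2-h-l)" unfolding e using den by simp
  show "1 \<le> 2/(2-h-l)" using den lh by (simp add: pos_le_divide_eq)
qed



lemma rho_MC: "rho (iterM n1 n2 C g1 g2) = spectral_radius (MC n1 n2 C g1 g2)"
  by (simp add: rho_def MC_def)

lemma rho_ge:
  assumes C: "C \<in> carrier_mat n2 n1" and n: "0 < n1 + n2" and ev: "eigenvalue (MC n1 n2 C g1 g2) lam"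
  shows "cmod lam \<le> rho (iterM n1 n2 C g1 g2)"
  unfolding rho_MC
  by (rule spectral_radius_mem_max(2)[OF MC_carrier[OF C] n], insert ev, auto simp: spectrum_def)

lemma rho_nonneg:
  assumes C: "C \<in> carrier_mat n2 n1" and n: "0 < n1 + n2"
  shows "0 \<le> rho (iterM n1 n2 C g1 g2)"
  using spectral_radius_mem_max(1)[OF MC_carrier[OF C] n, of g1 g2] unfolding rho_MC by auto

lemma rho_le:
  assumes C: "C \<in> carrier_mat n2 n1" and n: "0 < n1 + n2"
    and all: "\<And>lam. eigenvalue (MC n1 n2 C g1 g2) lam \<Longrightarrow> cmod lam \<le> r"
  shows "rho (iterM n1 n2 C g1 g2) \<le> r"
  using spectral_radius_mem_max(1)[OF MC_carrier[OF C] n, of g1 g2] all unfolding rho_MC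
  by (auto simp: spectrum_def)

lemma S_facts:
  assumes fin: "finite S" and ne: "S \<noteq> {}"
    and Sreal: "\<forall>\<mu>\<in>S. \<mu> = complex_of_real (Re \<mu>) \<and> 0 \<le> Re \<mu> \<and> Re \<mu> < 1"
  shows "\<exists>mh ml. mh \<in> S \<and> ml \<in> S \<and> 0 \<le> Re ml \<and> Re ml \<le> Re mh \<and> Re mh < 1 \<and>
     (\<forall>\<mu>\<in>S. Re ml \<le> Re \<mu> \<and> Re \<mu> \<le> Re mh)"
proof -
  have f: "finite (Re ` S)" and n: "Re ` S \<noteq> {}" using fin ne by auto
  obtain mh where mh: "mh \<in> S" "Re mh = Max (Re ` S)" using Max_in[OF f n] by auto
  obtain ml where ml: "ml \<in> S" "Re ml = Min (Re ` S)" using Min_in[OF f n] by auto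
  show ?thesis
  proof (intro exI conjI ballI)
    show "mh \<in> S" "ml \<in> S" by fact+
    show "0 \<le> Re ml" using Sreal ml by auto
    show "Re mh < 1" using Sreal mh by auto
    fix \<mu> assume "\<mu> \<in> S"
    thus "Re ml \<le> Re \<mu>" "Re \<mu> \<le> Re mh" unfolding mh ml using f by auto
  next
    show "Re ml \<le> Re mh" unfolding ml(2) by (rule Min_le[OF f], insert mh(1), auto)
  qed
qed

lemma claimA:
  fixes R :: "real \<Rightarrow> real \<Rightarrow> real" and Ev :: "real \<Rightarrow> real \<Rightarrow> complex \<Rightarrow> bool" and S :: "complex set"
  assumes fin: "finite S" and ne: "S \<noteq> {}"
    and Sreal: "\<forall>\<mu>\<in>S. \<mu> = complex_of_real (Re \<mu>) \<and> 0 \<le> Re \<mu> \<and> Re \<mu> < 1"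
    and ge: "\<And>u g lam. Ev u g lam \<Longrightarrow> cmod lam \<le> R u g"
    and nn: "\<And>u g. 0 \<le> R u g"
    and le: "\<And>u g r. (\<And>lam. Ev u g lam \<Longrightarrow> cmod lam \<le> r) \<Longrightarrow> R u g \<le> r"
    and G: "\<And>\<mu> u g lam. \<mu> \<in> S \<Longrightarrow> Re \<mu> \<noteq> 0 \<Longrightarrow> 0 < u \<Longrightarrow> 1 \<le> g \<Longrightarrow>
        lam^2 - complex_of_real (2-u-g+u*g*Re \<mu>) * lam + complex_of_real ((1-u)*(1-g)) = 0 \<Longrightarrow> Ev u g lam"
    and Z: "\<And>u g. 0 \<in> S \<Longrightarrow> Ev u g (complex_of_real (1-g))"
    and U: "\<And>g lam. 1 \<le> g \<Longrightarrow> Ev 1 g lam \<Longrightarrow> lam = 0 \<or> (\<exists>\<mu>\<in>S. lam = complex_of_real (1-g) + complex_of_real g * \<mu>)"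
  shows "\<exists>g'\<ge>1. is_min {R u g | u g. u \<in> {0<..1} \<and> g \<in> {1..}} (R 1 g') \<and>
                 is_min {R 1 g | g. g \<ge> 1} (R 1 g')"
proof -
  from S_facts[OF fin ne Sreal] obtain mh ml where mh: "mh \<in> S" and ml: "ml \<in> S"
    and l0: "0 \<le> Re ml" and lh: "Re ml \<le> Re mh" and h1: "Re mh < 1"
    and bnd: "\<And>\<mu>. \<mu> \<in> S \<Longrightarrow> Re ml \<le> Re \<mu> \<and> Re \<mu> \<le> Re mh" by blast
  define h where "h = Re mh"
  define l where "l = Re ml"
  define gs where "gs = 2/(2-h-l)"
  define r where "r = (h-l)/(2-h-l)"
  have den: "2-h-l > 0" unfolding h_def l_def using l0 lh h1 by simp
  have r0: "0 \<le> r" unfolding r_def using den lh unfolding h_def l_def by simp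
  have gs1: "1 \<le> gs" unfolding gs_def using R4(2)[OF l0 lh order_refl h1] unfolding h_def l_def .
  have UB: "R 1 gs \<le> r"
  proof (rule le)
    fix lam assume ev: "Ev 1 gs lam"
    from U[OF gs1 ev] show "cmod lam \<le> r"
    proof
      assume "lam = 0" thus ?thesis using r0 by simp
    next
      assume "\<exists>\<mu>\<in>S. lam = complex_of_real (1 - gs) + complex_of_real gs * \<mu>"
      then obtain \<mu> where mu: "\<mu> \<in> S" and lam: "lam = complex_of_real (1 - gs) + complex_of_real gs * \<mu>" by blast
      have mr: "\<mu> = complex_of_real (Re \<mu>)" using Sreal mu by auto
      have "lam = complex_of_real (1 - gs*(1 - Re \<mu>))" unfolding lam by (subst mr, simp add: algebra_simps)
      hence "cmod lam = \<bar>1 - gs*(1 - Re \<mu>)\<bar>" by (simp only: norm_of_real)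
      also have "\<dots> \<le> r" unfolding gs_def r_def h_def l_def
        by (rule R4(1), insert l0 bnd[OF mu] h1, auto)
      finally show ?thesis .
    qed
  qed
  have LB: "r \<le> R u g" if u: "0 < u" "u \<le> 1" and g: "1 \<le> g" for u g
  proof (cases "l = h")
    case True
    thus ?thesis unfolding r_def using nn by simp
  next
    case False
    hence lh': "l < h" using lh unfolding h_def l_def by simp
    have l0': "0 \<le> l" and h1': "h < 1" using l0 h1 unfolding l_def h_def by auto
    show ?thesis
    proof (cases "g \<le> gs")
      case True
      from R1[OF u g l0' lh' h1' True[unfolded gs_def]] obtain lam :: real where
        q: "lam^2 - (2-u-g+u*g*h)*lam + (1-u)*(1-g) = 0" and rl: "(h-l)/(2-h-l) \<le> lam" by blast
      have "Ev u g (complex_of_real lam)"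
      proof (rule G[OF mh _ u(1) g])
        show "Re mh \<noteq> 0" using lh' l0' unfolding h_def by simp
        have "(complex_of_real lam)^2 - complex_of_real (2-u-g+u*g*Re mh) * complex_of_real lam + complex_of_real ((1-u)*(1-g))
           = complex_of_real (lam^2 - (2-u-g+u*g*h)*lam + (1-u)*(1-g))" unfolding h_def by simp
        thus "(complex_of_real lam)^2 - complex_of_real (2-u-g+u*g*Re mh) * complex_of_real lam + complex_of_real ((1-u)*(1-g)) = 0"
          using q by simp
      qed
      from ge[OF this] have "\<bar>lam\<bar> \<le> R u g" by simp
      thus ?thesis using rl unfolding r_def by simp
    next
      case False
      hence gs_le: "gs \<le> g" by simp
      show ?thesis
      proof (cases "l = 0")
        case False
        from R2[OF u l0' lh' h1' gs_le[unfolded gs_def]] obtain lam :: real where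
          q: "lam^2 - (2-u-g+u*g*l)*lam + (1-u)*(1-g) = 0" and rl: "lam \<le> -((h-l)/(2-h-l))" by blast
        have "Ev u g (complex_of_real lam)"
        proof (rule G[OF ml _ u(1) g])
          show "Re ml \<noteq> 0" using False unfolding l_def by simp
          have "(complex_of_real lam)^2 - complex_of_real (2-u-g+u*g*Re ml) * complex_of_real lam + complex_of_real ((1-u)*(1-g))
             = complex_of_real (lam^2 - (2-u-g+u*g*l)*lam + (1-u)*(1-g))" unfolding l_def by simp
          thus "(complex_of_real lam)^2 - complex_of_real (2-u-g+u*g*Re ml) * complex_of_real lam + complex_of_real ((1-u)*(1-g)) = 0"
            using q by simp
        qed
        from ge[OF this] have "\<bar>lam\<bar> \<le> R u g" by simp
        thus ?thesis using rl unfolding r_def by simp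
      next
        case True
        have "ml = 0" using Sreal ml True unfolding l_def by (metis of_real_0)
        hence "0 \<in> S" using ml by simp
        from ge[OF Z[OF this, of u g]] have "\<bar>1-g\<bar> \<le> R u g" by (simp only: norm_of_real)
        moreover have "1 - g \<le> -r" unfolding r_def gs_def
          by (rule R3, insert l0' lh h1' gs_le, auto simp: gs_def h_def l_def)
        ultimately show ?thesis by simp
      qed
    qed
  qed
  show ?thesis
  proof (intro exI conjI)
    show "1 \<le> gs" by fact
    show "is_min {R u g | u g. u \<in> {0<..1} \<and> g \<in> {1..}} (R 1 gs)"
      unfolding is_min_def
    proof (intro conjI ballI)
      have "R 1 gs = R 1 gs \<and> (1::real) \<in> {0<..1} \<and> gs \<in> {1..}" using gs1 by auto
      thus "R 1 gs \<in> {R u g | u g. u \<in> {0<..1} \<and> g \<in> {1..}}" by blast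
      fix y assume "y \<in> {R u g | u g. u \<in> {0<..1} \<and> g \<in> {1..}}"
      then obtain u g where y: "y = R u g" "0 < u" "u \<le> 1" "1 \<le> g" by auto
      show "R 1 gs \<le> y" using UB LB[OF y(2-4)] y(1) by simp
    qed
    show "is_min {R 1 g | g. g \<ge> 1} (R 1 gs)"
      unfolding is_min_def
    proof (intro conjI ballI)
      show "R 1 gs \<in> {R 1 g | g. g \<ge> 1}" using gs1 by blast
      fix y assume "y \<in> {R 1 g | g. g \<ge> 1}"
      then obtain g where y: "y = R 1 g" "1 \<le> g" by auto
      show "R 1 gs \<le> y" using UB LB[of 1 g] y by simp
    qed
  qed
qed



lemma claim00:
  fixes R :: "real \<Rightarrow> real \<Rightarrow> real" and Ev :: "real \<Rightarrow> real \<Rightarrow> complex \<Rightarrow> bool" and S :: "complex set"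
  assumes fin: "finite S" and ne: "S \<noteq> {}"
    and Sreal: "\<forall>\<mu>\<in>S. \<mu> = complex_of_real (Re \<mu>) \<and> 0 \<le> Re \<mu> \<and> Re \<mu> < 1"
    and ge: "\<And>u g lam. Ev u g lam \<Longrightarrow> cmod lam \<le> R u g"
    and nn: "\<And>u g. 0 \<le> R u g"
    and le: "\<And>u g r. (\<And>lam. Ev u g lam \<Longrightarrow> cmod lam \<le> r) \<Longrightarrow> R u g \<le> r"
    and G: "\<And>\<mu> g1 g2 lam. \<mu> \<in> S \<Longrightarrow> Re \<mu> \<noteq> 0 \<Longrightarrow> 0 < g1 \<Longrightarrow>
        lam^2 - complex_of_real (2-g1-g2+g1*g2*Re \<mu>) * lam + complex_of_real ((1-g1)*(1-g2)) = 0 \<Longrightarrow> Ev g1 g2 lam"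
    and U: "\<And>lam. Ev 1 1 lam \<Longrightarrow> lam = 0 \<or> lam \<in> S"
  shows "is_min {R g1 g2 | g1 g2. g1 \<in> {0<..1} \<and> g2 \<in> {0<..1}} (R 1 1)"
proof -
  from S_facts[OF fin ne Sreal] obtain mh ml where mh: "mh \<in> S"
    and l0: "0 \<le> Re ml" and lh: "Re ml \<le> Re mh" and h1: "Re mh < 1"
    and bnd: "\<And>\<mu>. \<mu> \<in> S \<Longrightarrow> Re ml \<le> Re \<mu> \<and> Re \<mu> \<le> Re mh" by blast
  define h where "h = Re mh"
  have h0: "0 \<le> h" "h \<le> 1" using l0 lh h1 unfolding h_def by auto
  have UB: "R 1 1 \<le> h"
  proof (rule le)
    fix lam assume "Ev 1 1 lam"
    from U[OF this] show "cmod lam \<le> h"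
    proof
      assume "lam = 0" thus ?thesis using h0 by simp
    next
      assume mu: "lam \<in> S"
      have "lam = complex_of_real (Re lam)" "0 \<le> Re lam" using Sreal mu by auto
      hence "cmod lam = Re lam" by (metis abs_of_nonneg norm_of_real)
      thus ?thesis using bnd[OF mu] unfolding h_def by simp
    qed
  qed
  have LB: "h \<le> R g1 g2" if g1: "0 < g1" "g1 \<le> 1" and g2: "0 < g2" "g2 \<le> 1" for g1 g2
  proof (cases "h = 0")
    case True thus ?thesis using nn by simp
  next
    case False
    from R0[OF g1 g2 h0] obtain lam where q: "lam^2 - complex_of_real (2-g1-g2+g1*g2*h) * lam + complex_of_real ((1-g1)*(1-g2)) = 0"
      and hl: "h \<le> cmod lam" by blast
    have "Ev g1 g2 lam" by (rule G[OF mh _ g1(1)], insert False q, auto simp: h_def)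
    from ge[OF this] hl show ?thesis by simp
  qed
  show ?thesis unfolding is_min_def
  proof (intro conjI ballI)
    have "R 1 1 = R 1 1 \<and> (1::real) \<in> {0<..1} \<and> (1::real) \<in> {0<..1}" by auto
    thus "R 1 1 \<in> {R g1 g2 | g1 g2. g1 \<in> {0<..1} \<and> g2 \<in> {0<..1}}" by blast
    fix y assume "y \<in> {R g1 g2 | g1 g2. g1 \<in> {0<..1} \<and> g2 \<in> {0<..1}}"
    then obtain g1 g2 where y: "y = R g1 g2" "0 < g1" "g1 \<le> 1" "0 < g2" "g2 \<le> 1" by auto
    show "R 1 1 \<le> y" using UB LB[OF y(2-5)] y(1) by simp
  qed
qed



lemma hcat_inj:
  fixes A1 A2 :: "real mat"
  assumes A1: "A1 \<in> carrier_mat m n1" and A2: "A2 \<in> carrier_mat m n2"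
    and rank: "full_column_rank (hcat A1 A2)"
    and a: "a \<in> carrier_vec n1" and b: "b \<in> carrier_vec n2"
    and eq: "A1 *\<^sub>v a + A2 *\<^sub>v b = 0\<^sub>v m"
  shows "a = 0\<^sub>v n1 \<and> b = 0\<^sub>v n2"
proof -
  let ?H = "hcat A1 A2"
  have H: "?H = four_block_mat A1 A2 (0\<^sub>m 0 n1) (0\<^sub>m 0 n2)" unfolding hcat_def using A1 A2 by auto
  have dc: "dim_col ?H = n1 + n2" and dr: "dim_row ?H = m" unfolding H using A1 A2 by auto
  have "?H *\<^sub>v (a @\<^sub>v b) = (A1 *\<^sub>v a + A2 *\<^sub>v b) @\<^sub>v (0\<^sub>m 0 n1 *\<^sub>v a + 0\<^sub>m 0 n2 *\<^sub>v b)"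
    unfolding H by (rule four_block_mat_mult_vec[OF A1 A2 _ _ a b], auto)
  also have "\<dots> = 0\<^sub>v m" unfolding eq by (rule eq_vecI, auto)
  finally have "?H *\<^sub>v (a @\<^sub>v b) = 0\<^sub>v (dim_row ?H)" unfolding dr .
  moreover have "a @\<^sub>v b \<in> carrier_vec (dim_col ?H)" unfolding dc using a b by auto
  ultimately have "a @\<^sub>v b = 0\<^sub>v (dim_col ?H)" using rank unfolding full_column_rank_def by blast
  hence "a @\<^sub>v b = 0\<^sub>v n1 @\<^sub>v 0\<^sub>v n2" unfolding dc zero_append .
  thus ?thesis using append_vec_eq[OF a, of "0\<^sub>v n1"] by auto
qed

lemma neg_mv: "A \<in> carrier_mat r c \<Longrightarrow> u \<in> carrier_vec c \<Longrightarrow> A *\<^sub>v ((-1::real) \<cdot>\<^sub>v u) = (-1) \<cdot>\<^sub>v (A *\<^sub>v u)"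
  by (rule mult_mat_vec)

lemma spec_link:
  assumes P: "P \<in> carrier_mat k n" and Q: "Q \<in> carrier_mat n k"
  shows "\<mu> \<in> spectrum (P * Q) \<longleftrightarrow> (\<exists>y. y \<in> carrier_vec k \<and> y \<noteq> 0\<^sub>v k \<and> P *\<^sub>v (Q *\<^sub>v y) = (\<mu> :: complex) \<cdot>\<^sub>v y)"
proof -
  have d: "dim_row (P * Q) = k" using P by simp
  show ?thesis unfolding spectrum_def eigenvalue_def eigenvector_def d mem_Collect_eq
    using assoc_mult_mat_vec[OF P Q] by auto
qed



theorem mainTheorem13:
  fixes A1 A2 :: "real mat" and m n1 n2 :: nat
  defines "C \<equiv> transpose_mat A2 * A1"
  assumes A1: "A1 \<in> carrier_mat m n1" and A2: "A2 \<in> carrier_mat m n2"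
    and rank: "full_column_rank (hcat A1 A2)"
    and orth1: "transpose_mat A1 * A1 = 1\<^sub>m n1"
    and orth2: "transpose_mat A2 * A2 = 1\<^sub>m n2"
    and Cnz: "C \<noteq> 0\<^sub>m n2 n1"
  shows "is_min {rho (iterM n1 n2 C g1 g2) | g1 g2. g1 \<in> {0<..1} \<and> g2 \<in> {0<..1}}
                 (rho (iterM n1 n2 C 1 1)) \<and>
         (\<exists>g2'\<ge>1.
           is_min {rho (iterM n1 n2 C g1 g2) | g1 g2. g1 \<in> {0<..1} \<and> g2 \<in> {1..}}
                   (rho (iterM n1 n2 C 1 g2')) \<and>
           is_min {rho (iterM n1 n2 C 1 g2) | g2. g2 \<ge> 1} (rho (iterM n1 n2 C 1 g2'))) \<and>
         (\<exists>g1'\<ge>1.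
           is_min {rho (iterM n1 n2 C g1 g2) | g1 g2. g1 \<in> {1..} \<and> g2 \<in> {0<..1}}
                   (rho (iterM n1 n2 C g1' 1)) \<and>
           is_min {rho (iterM n1 n2 C g1 1) | g1. g1 \<ge> 1} (rho (iterM n1 n2 C g1' 1)))"
proof -
  have C: "C \<in> carrier_mat n2 n1" unfolding C_def using A1 A2 by auto
  have n1: "0 < n1"
  proof (rule ccontr)
    assume "\<not> 0 < n1"
    hence "C = 0\<^sub>m n2 n1" using C by (intro eq_matI, auto)
    thus False using Cnz by simp
  qed
  have n2: "0 < n2"
  proof (rule ccontr)
    assume "\<not> 0 < n2"
    hence "C = 0\<^sub>m n2 n1" using C by (intro eq_matI, auto)
    thus False using Cnz by simp
  qed
  have n: "0 < n1 + n2" using n1 by simp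
  let ?Cc = "cm C" and ?Ct = "transpose_mat (cm C)"
  have Cc: "?Cc \<in> carrier_mat n2 n1" and Ct: "?Ct \<in> carrier_mat n1 n2" using C by auto
  have injE2: "\<And>u v. u \<in> carrier_vec n1 \<Longrightarrow> v \<in> carrier_vec n2 \<Longrightarrow> A1 *\<^sub>v u = A2 *\<^sub>v v \<Longrightarrow> v = 0\<^sub>v n2"
  proof -
    fix u v assume u: "u \<in> carrier_vec n1" and v: "v \<in> carrier_vec n2" and e: "A1 *\<^sub>v u = A2 *\<^sub>v v"
    have "A1 *\<^sub>v ((-1) \<cdot>\<^sub>v u) + A2 *\<^sub>v v = 0\<^sub>v m"
      unfolding neg_mv[OF A1 u] e by (rule eq_vecI, insert A2 v, auto)
    from hcat_inj[OF A1 A2 rank _ v this] u show "v = 0\<^sub>v n2" by auto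
  qed
  have injE1: "\<And>u v. u \<in> carrier_vec n2 \<Longrightarrow> v \<in> carrier_vec n1 \<Longrightarrow> A2 *\<^sub>v u = A1 *\<^sub>v v \<Longrightarrow> v = 0\<^sub>v n1"
  proof -
    fix u v assume u: "u \<in> carrier_vec n2" and v: "v \<in> carrier_vec n1" and e: "A2 *\<^sub>v u = A1 *\<^sub>v v"
    have "A1 *\<^sub>v v + A2 *\<^sub>v ((-1) \<cdot>\<^sub>v u) = 0\<^sub>v m"
      unfolding neg_mv[OF A2 u] e by (rule eq_vecI, insert A1 v, auto)
    from hcat_inj[OF A1 A2 rank v _ this] u show "v = 0\<^sub>v n1" by auto
  qed
  have CcE: "cm C = transpose_mat (cm A2) * cm A1"
    unfolding C_def using cm_mult[of "transpose_mat A2" n2 m A1 n1] A1 A2 by (simp add: tcm)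
  have CtE: "transpose_mat (cm C) = transpose_mat (cm A1) * cm A2"
  proof -
    have "transpose_mat C = transpose_mat A1 * A2" unfolding C_def
      using transpose_mult[of "transpose_mat A2" n2 m A1 n1] A1 A2 by simp
    thus ?thesis using cm_mult[of "transpose_mat A1" n1 m A2 n2] A1 A2 by (simp add: tcm)
  qed
  have fC: "\<And>w. w \<in> carrier_vec n1 \<Longrightarrow> ?Cc *\<^sub>v w = transpose_mat (cm A2) *\<^sub>v (cm A1 *\<^sub>v w)"
    unfolding CcE using A1 A2 by (subst assoc_mult_mat_vec[of _ n2 m _ n1], auto)
  have fCt: "\<And>y. y \<in> carrier_vec n2 \<Longrightarrow> ?Ct *\<^sub>v y = transpose_mat (cm A1) *\<^sub>v (cm A2 *\<^sub>v y)"
    unfolding CtE using A1 A2 by (subst assoc_mult_mat_vec[of _ n1 m _ n2], auto)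
  have spec2: "\<And>y \<mu>. y \<in> carrier_vec n2 \<Longrightarrow> y \<noteq> 0\<^sub>v n2 \<Longrightarrow> ?Cc *\<^sub>v (?Ct *\<^sub>v y) = \<mu> \<cdot>\<^sub>v y \<Longrightarrow>
      \<mu> = of_real (Re \<mu>) \<and> 0 \<le> Re \<mu> \<and> Re \<mu> < 1 \<and> (\<mu> = 0 \<longrightarrow> ?Ct *\<^sub>v y = 0\<^sub>v n1)"
  proof -
    fix y \<mu> assume y: "y \<in> carrier_vec n2" and y0: "y \<noteq> 0\<^sub>v n2" and e: "?Cc *\<^sub>v (?Ct *\<^sub>v y) = \<mu> \<cdot>\<^sub>v y"
    have "transpose_mat (cm A2) *\<^sub>v (cm A1 *\<^sub>v (transpose_mat (cm A1) *\<^sub>v (cm A2 *\<^sub>v y))) = \<mu> \<cdot>\<^sub>v y"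
    proof -
      have u: "?Ct *\<^sub>v y \<in> carrier_vec n1" using Ct y by auto
      show ?thesis using e fC[OF u] fCt[OF y] by metis
    qed
    from spec_lemma[OF A1 A2 orth1 orth2 injE2 y y0 this] show "?thesis y \<mu>" using fCt[OF y] by simp
  qed
  have spec1: "\<And>x \<mu>. x \<in> carrier_vec n1 \<Longrightarrow> x \<noteq> 0\<^sub>v n1 \<Longrightarrow> ?Ct *\<^sub>v (?Cc *\<^sub>v x) = \<mu> \<cdot>\<^sub>v x \<Longrightarrow>
      \<mu> = of_real (Re \<mu>) \<and> 0 \<le> Re \<mu> \<and> Re \<mu> < 1 \<and> (\<mu> = 0 \<longrightarrow> ?Cc *\<^sub>v x = 0\<^sub>v n2)"
  proof -
    fix x \<mu> assume x: "x \<in> carrier_vec n1" and x0: "x \<noteq> 0\<^sub>v n1" and e: "?Ct *\<^sub>v (?Cc *\<^sub>v x) = \<mu> \<cdot>\<^sub>v x"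
    have "transpose_mat (cm A1) *\<^sub>v (cm A2 *\<^sub>v (transpose_mat (cm A2) *\<^sub>v (cm A1 *\<^sub>v x))) = \<mu> \<cdot>\<^sub>v x"
    proof -
      have u: "?Cc *\<^sub>v x \<in> carrier_vec n2" using Cc x by auto
      show ?thesis using e fCt[OF u] fC[OF x] by metis
    qed
    from spec_lemma[OF A2 A1 orth2 orth1 injE1 x x0 this] show "?thesis x \<mu>" using fC[OF x] by simp
  qed
  define S2 where "S2 = spectrum (?Cc * ?Ct)"
  define S1 where "S1 = spectrum (?Ct * ?Cc)"
  have S2c: "?Cc * ?Ct \<in> carrier_mat n2 n2" and S1c: "?Ct * ?Cc \<in> carrier_mat n1 n1" using Cc Ct by auto
  have link2: "\<And>\<mu>. \<mu> \<in> S2 \<longleftrightarrow> (\<exists>y. y \<in> carrier_vec n2 \<and> y \<noteq> 0\<^sub>v n2 \<and> ?Cc *\<^sub>v (?Ct *\<^sub>v y) = \<mu> \<cdot>\<^sub>v y)"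
    unfolding S2_def by (rule spec_link[OF Cc Ct])
  have link1: "\<And>\<mu>. \<mu> \<in> S1 \<longleftrightarrow> (\<exists>x. x \<in> carrier_vec n1 \<and> x \<noteq> 0\<^sub>v n1 \<and> ?Ct *\<^sub>v (?Cc *\<^sub>v x) = \<mu> \<cdot>\<^sub>v x)"
    unfolding S1_def by (rule spec_link[OF Ct Cc])
  have fin2: "finite S2" and ne2: "S2 \<noteq> {}" unfolding S2_def
    using card_finite_spectrum(1)[OF S2c] spectrum_non_empty[OF S2c n2] by auto
  have fin1: "finite S1" and ne1: "S1 \<noteq> {}" unfolding S1_def
    using card_finite_spectrum(1)[OF S1c] spectrum_non_empty[OF S1c n1] by auto
  have real2: "\<forall>\<mu>\<in>S2. \<mu> = complex_of_real (Re \<mu>) \<and> 0 \<le> Re \<mu> \<and> Re \<mu> < 1"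
    using spec2 link2 by blast
  have real1: "\<forall>\<mu>\<in>S1. \<mu> = complex_of_real (Re \<mu>) \<and> 0 \<le> Re \<mu> \<and> Re \<mu> < 1"
    using spec1 link1 by blast
  have G2: "eigenvalue (MC n1 n2 C g1 g2) lam"
    if mu: "\<mu> \<in> S2" and nz: "Re \<mu> \<noteq> 0" and g1: "0 < g1"
      and q: "lam^2 - complex_of_real (2-g1-g2+g1*g2*Re \<mu>) * lam + complex_of_real ((1-g1)*(1-g2)) = 0"
    for \<mu> g1 g2 lam
  proof -
    from mu[unfolded link2] obtain y where y: "y \<in> carrier_vec n2" "y \<noteq> 0\<^sub>v n2"
      and e: "?Cc *\<^sub>v (?Ct *\<^sub>v y) = \<mu> \<cdot>\<^sub>v y" by blast
    have mr: "\<mu> = of_real (Re \<mu>)" using real2 mu by auto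
    have u0: "?Ct *\<^sub>v y \<noteq> 0\<^sub>v n1"
    proof
      assume "?Ct *\<^sub>v y = 0\<^sub>v n1"
      hence "\<mu> \<cdot>\<^sub>v y = 0\<^sub>v n2" using e mv0[OF Cc] by simp
      hence "\<mu> = 0" by (rule smult_zero_nz[OF y])
      thus False using nz by simp
    qed
    have e': "?Cc *\<^sub>v (?Ct *\<^sub>v y) = complex_of_real (Re \<mu>) \<cdot>\<^sub>v y" using e mr by metis
    show ?thesis by (rule L1[OF C y(1) u0 e' _ q], insert g1, simp)
  qed
  have G1: "eigenvalue (MC n1 n2 C g u) lam"
    if mu: "\<mu> \<in> S1" and nz: "Re \<mu> \<noteq> 0" and g: "1 \<le> g"
      and q: "lam^2 - complex_of_real (2-u-g+u*g*Re \<mu>) * lam + complex_of_real ((1-u)*(1-g)) = 0"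
    for \<mu> u g lam
  proof -
    from mu[unfolded link1] obtain x where x: "x \<in> carrier_vec n1" "x \<noteq> 0\<^sub>v n1"
      and e: "?Ct *\<^sub>v (?Cc *\<^sub>v x) = \<mu> \<cdot>\<^sub>v x" by blast
    have mr: "\<mu> = of_real (Re \<mu>)" using real1 mu by auto
    define y where "y = ?Cc *\<^sub>v x"
    have y: "y \<in> carrier_vec n2" unfolding y_def using Cc x by auto
    have u0: "?Ct *\<^sub>v y \<noteq> 0\<^sub>v n1"
    proof
      assume "?Ct *\<^sub>v y = 0\<^sub>v n1"
      hence "\<mu> \<cdot>\<^sub>v x = 0\<^sub>v n1" using e unfolding y_def by simp
      hence "\<mu> = 0" by (rule smult_zero_nz[OF x])
      thus False using nz by simp
    qed
    have e': "?Cc *\<^sub>v (?Ct *\<^sub>v y) = complex_of_real (Re \<mu>) \<cdot>\<^sub>v y"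
      unfolding y_def e using mult_mat_vec[OF Cc x(1), of \<mu>] mr by metis
    have q': "lam^2 - complex_of_real (2-g-u+g*u*Re \<mu>) * lam + complex_of_real ((1-g)*(1-u)) = 0"
    proof -
      have e1: "2-g-u+g*u*Re \<mu> = 2-u-g+u*g*Re \<mu>" and e2: "(1-g)*(1-u) = (1-u)*(1-g)" by (simp_all add: algebra_simps)
      show ?thesis unfolding e1 e2 by (rule q)
    qed
    show ?thesis by (rule L1[OF C y u0 e' _ q'], insert g, simp)
  qed
  have Z2: "eigenvalue (MC n1 n2 C u g) (complex_of_real (1-g))" if "0 \<in> S2" for u g
  proof -
    from that[unfolded link2] obtain y where y: "y \<in> carrier_vec n2" "y \<noteq> 0\<^sub>v n2"
      and e: "?Cc *\<^sub>v (?Ct *\<^sub>v y) = 0 \<cdot>\<^sub>v y" by blast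
    have "?Ct *\<^sub>v y = 0\<^sub>v n1" using spec2[OF y e] by simp
    from L2[OF C y this] show ?thesis .
  qed
  have Z1: "eigenvalue (MC n1 n2 C g u) (complex_of_real (1-g))" if "0 \<in> S1" for u g
  proof -
    from that[unfolded link1] obtain x where x: "x \<in> carrier_vec n1" "x \<noteq> 0\<^sub>v n1"
      and e: "?Ct *\<^sub>v (?Cc *\<^sub>v x) = 0 \<cdot>\<^sub>v x" by blast
    have "?Cc *\<^sub>v x = 0\<^sub>v n2" using spec1[OF x e] by simp
    from L3[OF C x this] show ?thesis .
  qed
  have U2: "lam = 0 \<or> (\<exists>\<mu>\<in>S2. lam = complex_of_real (1-g) + complex_of_real g * \<mu>)"
    if g: "1 \<le> g" and ev: "eigenvalue (MC n1 n2 C 1 g) lam" for g lam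
  proof -
    have gnz: "g \<noteq> 0" using g by simp
    show ?thesis
    proof (cases "lam = 0")
      case False
      with Ua[OF C gnz ev] obtain y \<mu> where y: "y \<in> carrier_vec n2" "y \<noteq> 0\<^sub>v n2"
        "?Cc *\<^sub>v (?Ct *\<^sub>v y) = \<mu> \<cdot>\<^sub>v y" and lam: "lam = complex_of_real (1-g) + complex_of_real g * \<mu>"
        by blast
      have "\<mu> \<in> S2" unfolding link2 using y by blast
      thus ?thesis using lam by blast
    qed simp
  qed
  have U1: "lam = 0 \<or> (\<exists>\<mu>\<in>S1. lam = complex_of_real (1-g) + complex_of_real g * \<mu>)"
    if g: "1 \<le> g" and ev: "eigenvalue (MC n1 n2 C g 1) lam" for g lam
  proof -
    have gnz: "g \<noteq> 0" using g by simp
    show ?thesis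
    proof (cases "lam = 0")
      case False
      with Ub[OF C gnz ev] obtain x \<mu> where x: "x \<in> carrier_vec n1" "x \<noteq> 0\<^sub>v n1"
        "?Ct *\<^sub>v (?Cc *\<^sub>v x) = \<mu> \<cdot>\<^sub>v x" and lam: "lam = complex_of_real (1-g) + complex_of_real g * \<mu>"
        by blast
      have "\<mu> \<in> S1" unfolding link1 using x by blast
      thus ?thesis using lam by blast
    qed simp
  qed
  have c1: "is_min {rho (iterM n1 n2 C g1 g2) | g1 g2. g1 \<in> {0<..1} \<and> g2 \<in> {0<..1}} (rho (iterM n1 n2 C 1 1))"
  proof (rule claim00[where R="\<lambda>g1 g2. rho (iterM n1 n2 C g1 g2)" and Ev="\<lambda>g1 g2. eigenvalue (MC n1 n2 C g1 g2)", OF fin2 ne2 real2])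
    show "\<And>u g lam. eigenvalue (MC n1 n2 C u g) lam \<Longrightarrow> cmod lam \<le> rho (iterM n1 n2 C u g)" by (rule rho_ge[OF C n])
    show "\<And>u g. 0 \<le> rho (iterM n1 n2 C u g)" by (rule rho_nonneg[OF C n])
    show "\<And>u g r. (\<And>lam. eigenvalue (MC n1 n2 C u g) lam \<Longrightarrow> cmod lam \<le> r) \<Longrightarrow> rho (iterM n1 n2 C u g) \<le> r"
      by (rule rho_le[OF C n])
    show "\<And>\<mu> g1 g2 lam. \<mu> \<in> S2 \<Longrightarrow> Re \<mu> \<noteq> 0 \<Longrightarrow> 0 < g1 \<Longrightarrow>
        lam^2 - complex_of_real (2-g1-g2+g1*g2*Re \<mu>) * lam + complex_of_real ((1-g1)*(1-g2)) = 0 \<Longrightarrow>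
        eigenvalue (MC n1 n2 C g1 g2) lam" by (rule G2)
    show "\<And>lam. eigenvalue (MC n1 n2 C 1 1) lam \<Longrightarrow> lam = 0 \<or> lam \<in> S2"
      using U2[of 1] by auto
  qed
  have c2: "\<exists>g2'\<ge>1.
           is_min {rho (iterM n1 n2 C g1 g2) | g1 g2. g1 \<in> {0<..1} \<and> g2 \<in> {1..}}
                   (rho (iterM n1 n2 C 1 g2')) \<and>
           is_min {rho (iterM n1 n2 C 1 g2) | g2. g2 \<ge> 1} (rho (iterM n1 n2 C 1 g2'))"
  proof (rule claimA[where R="\<lambda>g1 g2. rho (iterM n1 n2 C g1 g2)" and Ev="\<lambda>g1 g2. eigenvalue (MC n1 n2 C g1 g2)", OF fin2 ne2 real2])
    show "\<And>u g lam. eigenvalue (MC n1 n2 C u g) lam \<Longrightarrow> cmod lam \<le> rho (iterM n1 n2 C u g)" by (rule rho_ge[OF C n])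
    show "\<And>u g. 0 \<le> rho (iterM n1 n2 C u g)" by (rule rho_nonneg[OF C n])
    show "\<And>u g r. (\<And>lam. eigenvalue (MC n1 n2 C u g) lam \<Longrightarrow> cmod lam \<le> r) \<Longrightarrow> rho (iterM n1 n2 C u g) \<le> r"
      by (rule rho_le[OF C n])
    show "\<And>\<mu> u g lam. \<mu> \<in> S2 \<Longrightarrow> Re \<mu> \<noteq> 0 \<Longrightarrow> 0 < u \<Longrightarrow> 1 \<le> g \<Longrightarrow>
        lam^2 - complex_of_real (2-u-g+u*g*Re \<mu>) * lam + complex_of_real ((1-u)*(1-g)) = 0 \<Longrightarrow>
        eigenvalue (MC n1 n2 C u g) lam" by (rule G2)
    show "\<And>u g. 0 \<in> S2 \<Longrightarrow> eigenvalue (MC n1 n2 C u g) (complex_of_real (1-g))" by (rule Z2)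
    show "\<And>g lam. 1 \<le> g \<Longrightarrow> eigenvalue (MC n1 n2 C 1 g) lam \<Longrightarrow> lam = 0 \<or> (\<exists>\<mu>\<in>S2. lam = complex_of_real (1-g) + complex_of_real g * \<mu>)"
      by (rule U2)
  qed
  have c3': "\<exists>g'\<ge>1. is_min {rho (iterM n1 n2 C g u) | u g. u \<in> {0<..1} \<and> g \<in> {1..}} (rho (iterM n1 n2 C g' 1)) \<and>
                 is_min {rho (iterM n1 n2 C g 1) | g. g \<ge> 1} (rho (iterM n1 n2 C g' 1))"
  proof (rule claimA[where R="\<lambda>u g. rho (iterM n1 n2 C g u)" and Ev="\<lambda>u g. eigenvalue (MC n1 n2 C g u)", OF fin1 ne1 real1])
    show "\<And>u g lam. eigenvalue (MC n1 n2 C g u) lam \<Longrightarrow> cmod lam \<le> rho (iterM n1 n2 C g u)" by (rule rho_ge[OF C n])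
    show "\<And>u g. 0 \<le> rho (iterM n1 n2 C g u)" by (rule rho_nonneg[OF C n])
    show "\<And>u g r. (\<And>lam. eigenvalue (MC n1 n2 C g u) lam \<Longrightarrow> cmod lam \<le> r) \<Longrightarrow> rho (iterM n1 n2 C g u) \<le> r"
      by (rule rho_le[OF C n])
    show "\<And>\<mu> u g lam. \<mu> \<in> S1 \<Longrightarrow> Re \<mu> \<noteq> 0 \<Longrightarrow> 0 < u \<Longrightarrow> 1 \<le> g \<Longrightarrow>
        lam^2 - complex_of_real (2-u-g+u*g*Re \<mu>) * lam + complex_of_real ((1-u)*(1-g)) = 0 \<Longrightarrow>
        eigenvalue (MC n1 n2 C g u) lam" by (rule G1)
    show "\<And>u g. 0 \<in> S1 \<Longrightarrow> eigenvalue (MC n1 n2 C g u) (complex_of_real (1-g))" by (rule Z1)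
    show "\<And>g lam. 1 \<le> g \<Longrightarrow> eigenvalue (MC n1 n2 C g 1) lam \<Longrightarrow> lam = 0 \<or> (\<exists>\<mu>\<in>S1. lam = complex_of_real (1-g) + complex_of_real g * \<mu>)"
      by (rule U1)
  qed
  have seq: "{rho (iterM n1 n2 C g u) | u g. u \<in> {0<..1} \<and> g \<in> {1..}} =
             {rho (iterM n1 n2 C g1 g2) | g1 g2. g1 \<in> {1..} \<and> g2 \<in> {0<..1}}" by blast
  from c1 c2 c3'[unfolded seq] show ?thesis by blast
qed


end
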